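(* For all integers $m,k\ge 0$, $$\zeta(\bar 1,\{1\}_m,\bar 1,\{1\}_k)=(-1)^{m+1}\,\mathrm{Li}_{k+2,\{1\}_m}\!\left(\tfrac12\right).$$
   Context: For nonzero integers $s_1,\dots,s_k$, with $\operatorname{sgn}(s)=1$ if $s>0$ and $-1$ if $s<0$, the multiple zeta value is $\zeta(s_1,\dots,s_k)=\sum_{n_1>n_2>\cdots>n_k\ge 1}\prod_{j=1}^k n_j^{-|s_j|}\operatorname{sgn}(s_j)^{n_j}$. A barred entry $\bar p$ denotes the negative entry $-p$. The notation $\{1\}_d$ means the entry $1$ repeated $d$ times ($d=0$ means no entries). For positive integers $s_1,\dots,s_r$ and $0\le x<1$, the multiple polylogarithm is $\mathrm{Li}_{s_1,\dots,s_r}(x)=\sum_{n_1>\cdots>n_r>0}\frac{x^{n_1}}{n_1^{s_1}\cdots n_r^{s_r}}$. *)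

theory Defs
  imports Complex_Main
begin

definition mzv_term :: "int \<Rightarrow> nat \<Rightarrow> real" where
  "mzv_term s n = (if s < 0 then (-1) ^ n else 1) / real n ^ nat \<bar>s\<bar>"

text \<open>Truncated nested sum over N > n_1 > n_2 > ... > n_k \<ge> 1.\<close>
fun mzv_partial :: "int list \<Rightarrow> nat \<Rightarrow> real" where
  "mzv_partial [] N = 1"
| "mzv_partial (s # ss) N = (\<Sum>n\<in>{1..<N}. mzv_term s n * mzv_partial ss n)"

definition mzv :: "int list \<Rightarrow> real" where
  "mzv s = lim (\<lambda>N. mzv_partial s N)"

fun mpl_partial :: "nat list \<Rightarrow> real \<Rightarrow> nat \<Rightarrow> real" where
  "mpl_partial [] x N = 1"
| "mpl_partial (s # ss) x N =
     (\<Sum>n\<in>{1..<N}. x ^ n / real n ^ s * mzv_partial (map int ss) n)"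

definition mpl :: "nat list \<Rightarrow> real \<Rightarrow> real" where
  "mpl s x = lim (\<lambda>N. mpl_partial s x N)"

end

theory Submission
  imports Defs "HOL-Analysis.Analysis" "HOL-Real_Asymp.Real_Asymp"
begin


lemma mzv_term_0: "s \<noteq> 0 \<Longrightarrow> mzv_term s 0 = 0"
  by (simp add: mzv_term_def)

lemma mzv_term_abs: "s \<noteq> 0 \<Longrightarrow> \<bar>mzv_term s n\<bar> \<le> 1 / real n"
proof (cases "n = 0")
  case False
  assume s: "s \<noteq> 0"
  have "nat \<bar>s\<bar> \<ge> 1" using s by simp
  then have "real n ^ 1 \<le> real n ^ nat \<bar>s\<bar>" using False
    by (intro power_increasing) auto
  then have "1 / real n ^ nat \<bar>s\<bar> \<le> 1 / real n" using False
    by (intro divide_left_mono) auto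
  moreover have "\<bar>mzv_term s n\<bar> = 1 / real n ^ nat \<bar>s\<bar>"
    by (cases "s < 0") (simp_all add: mzv_term_def abs_divide power_abs)
  ultimately show ?thesis by simp
qed (auto simp: mzv_term_0)

lemma mzv_term_le1: "s \<noteq> 0 \<Longrightarrow> \<bar>mzv_term s n\<bar> \<le> 1"
proof -
  assume s: "s \<noteq> 0"
  have "\<bar>mzv_term s n\<bar> \<le> 1 / real n" by (rule mzv_term_abs[OF s])
  moreover have "n = 0 \<Longrightarrow> mzv_term s n = 0" using s by (simp add: mzv_term_0)
  moreover have "n \<ge> 1 \<Longrightarrow> 1 / real n \<le> 1" by simp
  ultimately show ?thesis by (cases "n = 0") (auto intro: order_trans)
qed

lemma sum_inv_sqrt: "(\<Sum>j\<in>{1..<Suc n}. 1 / sqrt (real j)) \<le> 2 * sqrt (real n)"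
proof (induction n)
  case 0 then show ?case by simp
next
  case (Suc n)
  define a where "a = sqrt (real n)"
  define b where "b = sqrt (real n + 1)"
  have a0: "a \<ge> 0" and b0: "b > 0" by (auto simp: a_def b_def)
  have ab: "b^2 = a^2 + 1" by (simp add: a_def b_def)
  have key: "2 * a + 1 / b \<le> 2 * b"
  proof -
    have h1: "0 \<le> a*a - 2*(a*b) + b*b"
      using zero_le_power2[of "a-b"] by (simp add: power2_eq_square algebra_simps)
    have h2: "b*b = a*a + 1" using ab by (simp add: power2_eq_square)
    have "2 * a * b + 1 \<le> 2 * b^2" using h1 h2 by (simp add: power2_eq_square)
    then show ?thesis using b0 by (simp add: field_simps power2_eq_square)
  qed
  have "(\<Sum>j\<in>{1..<Suc (Suc n)}. 1 / sqrt (real j)) = (\<Sum>j\<in>{1..<Suc n}. 1 / sqrt (real j)) + 1 / b"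
    by (simp add: b_def add.commute)
  also have "\<dots> \<le> 2 * a + 1 / b" using Suc by (simp add: a_def)
  also have "\<dots> \<le> 2 * b" by (rule key)
  finally show ?case by (simp add: b_def add.commute)
qed

lemma sum_inv_sqrt': "(\<Sum>j\<in>{1..<n}. 1 / sqrt (real j)) \<le> 2 * sqrt (real n)"
proof (cases n)
  case (Suc n')
  have "(\<Sum>j\<in>{1..<n}. 1 / sqrt (real j)) \<le> 2 * sqrt (real n')" using sum_inv_sqrt Suc by simp
  also have "\<dots> \<le> 2 * sqrt (real n)" using Suc by simp
  finally show ?thesis .
qed simp

lemma sum_sqrt_bound: "(\<Sum>j\<in>{1..<n}. sqrt (real j + 1) / real j) \<le> 3 * sqrt (real n + 1)"
proof -
  have "(\<Sum>j\<in>{1..<n}. sqrt (real j + 1) / real j) \<le> (\<Sum>j\<in>{1..<n}. (3/2) * (1 / sqrt (real j)))"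
  proof (rule sum_mono)
    fix j assume "j \<in> {1..<n}"
    then have j: "real j \<ge> 1" by simp
    have "sqrt (real j + 1) * sqrt (real j) \<le> 3/2 * real j"
    proof -
      have "sqrt (real j + 1) * sqrt (real j) = sqrt ((real j + 1) * real j)" by (simp add: real_sqrt_mult)
      also have "\<dots> \<le> sqrt ((3/2 * real j)^2)" using j
      proof (intro real_sqrt_le_mono)
        have h: "real j * 1 \<le> real j * real j" using j by (intro mult_left_mono) auto
        then show "(real j + 1) * real j \<le> (3/2 * real j)^2" by (simp add: power2_eq_square algebra_simps)
      qed
      also have "\<dots> = 3/2 * real j" using j by simp
      finally show ?thesis .
    qed
    then show "sqrt (real j + 1) / real j \<le> 3 / 2 * (1 / sqrt (real j))" using j
      by (simp add: field_simps)
  qed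
  also have "\<dots> = 3/2 * (\<Sum>j\<in>{1..<n}. 1 / sqrt (real j))" by (simp add: sum_distrib_left)
  also have "\<dots> \<le> 3/2 * (2 * sqrt (real n))" using sum_inv_sqrt' by (intro mult_left_mono) auto
  also have "\<dots> \<le> 3 * sqrt (real n + 1)" by simp
  finally show ?thesis .
qed

lemma mzv_partial_bound:
  "list_all (\<lambda>s. s \<noteq> 0) A \<Longrightarrow> \<bar>mzv_partial A n\<bar> \<le> 3 ^ length A * sqrt (real n + 1)"
proof (induction A arbitrary: n)
  case Nil
  have "1 \<le> sqrt (real n + 1)" by simp
  then show ?case by simp
next
  case (Cons s A)
  have s: "s \<noteq> 0" and IH: "\<And>n. \<bar>mzv_partial A n\<bar> \<le> 3 ^ length A * sqrt (real n + 1)"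
    using Cons by auto
  have "\<bar>mzv_partial (s # A) n\<bar> \<le> (\<Sum>j\<in>{1..<n}. \<bar>mzv_term s j * mzv_partial A j\<bar>)"
    by (simp add: sum_abs)
  also have "\<dots> \<le> (\<Sum>j\<in>{1..<n}. 3 ^ length A * (sqrt (real j + 1) / real j))"
  proof (rule sum_mono)
    fix j assume "j \<in> {1..<n}"
    have "\<bar>mzv_term s j * mzv_partial A j\<bar> = \<bar>mzv_term s j\<bar> * \<bar>mzv_partial A j\<bar>" by (simp add: abs_mult)
    also have "\<dots> \<le> (1 / real j) * (3 ^ length A * sqrt (real j + 1))"
      by (intro mult_mono mzv_term_abs s IH) auto
    finally show "\<bar>mzv_term s j * mzv_partial A j\<bar> \<le> 3 ^ length A * (sqrt (real j + 1) / real j)" by simp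
  qed
  also have "\<dots> = 3 ^ length A * (\<Sum>j\<in>{1..<n}. sqrt (real j + 1) / real j)" by (simp add: sum_distrib_left)
  also have "\<dots> \<le> 3 ^ length A * (3 * sqrt (real n + 1))" by (intro mult_left_mono sum_sqrt_bound) auto
  finally show ?case by simp
qed



fun Gc :: "int list \<Rightarrow> real \<Rightarrow> real" where
  "Gc [] z = 1"
| "Gc (s # A) z = (\<Sum>n. (mzv_term s n * mzv_partial A n) * z ^ n)"

abbreviation nz :: "int list \<Rightarrow> bool" where "nz A \<equiv> list_all (\<lambda>s. s \<noteq> 0) A"

lemma summable_Suc_geom: "0 \<le> r \<Longrightarrow> r < 1 \<Longrightarrow> summable (\<lambda>n. real (Suc n) * r ^ n)"
proof -
  assume r: "0 \<le> r" "r < 1"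
  have "summable (\<lambda>n. diffs (\<lambda>_. 1::real) n * r ^ n)"
    by (rule termdiff_converges[of r 1]) (use r in \<open>auto intro!: summable_geometric\<close>)
  then show ?thesis by (simp add: diffs_def)
qed

lemma Gc_summable_norm:
  assumes s: "s \<noteq> 0" and A: "nz A" and z: "\<bar>z\<bar> < 1"
  shows "summable (\<lambda>n. norm ((mzv_term s n * mzv_partial A n) * z ^ n))"
proof (rule summable_comparison_test[OF _ summable_mult[OF summable_Suc_geom[of "\<bar>z\<bar>"], of "3 ^ length A"]])
  show "\<exists>N. \<forall>n\<ge>N. norm (norm ((mzv_term s n * mzv_partial A n) * z ^ n)) \<le> 3 ^ length A * (real (Suc n) * \<bar>z\<bar> ^ n)"
  proof (intro exI allI impI)
    fix n :: nat
    have sq: "sqrt (real n + 1) \<le> real (Suc n)"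
    proof -
      have "sqrt (real n + 1) \<le> sqrt ((real n + 1)^2)"
        by (intro real_sqrt_le_mono) (simp add: power2_eq_square)
      then show ?thesis by simp
    qed
    have "norm (norm ((mzv_term s n * mzv_partial A n) * z ^ n)) = \<bar>mzv_term s n\<bar> * \<bar>mzv_partial A n\<bar> * \<bar>z\<bar> ^ n"
      by (simp add: abs_mult power_abs)
    also have "\<dots> \<le> 1 * (3 ^ length A * real (Suc n)) * \<bar>z\<bar> ^ n"
      by (intro mult_right_mono mult_mono mzv_term_le1 s order_trans[OF mzv_partial_bound[OF A]])
         (use sq in auto)
    finally show "norm (norm ((mzv_term s n * mzv_partial A n) * z ^ n)) \<le> 3 ^ length A * (real (Suc n) * \<bar>z\<bar> ^ n)"
      by simp
  qed
qed (use z in auto)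

lemma Gc_summable:
  assumes "s \<noteq> 0" "nz A" "\<bar>z\<bar> < 1"
  shows "summable (\<lambda>n. (mzv_term s n * mzv_partial A n) * z ^ n)"
  using summable_norm_cancel[OF Gc_summable_norm[OF assms]] .

lemma Gc_zero: "s \<noteq> 0 \<Longrightarrow> Gc (s # A) 0 = 0"
  by (simp add: mzv_term_0)

lemma mzv_partial_Suc_atMost:
  assumes "t \<noteq> 0"
  shows "mzv_partial (t # A) (Suc k) = (\<Sum>i\<le>k. mzv_term t i * mzv_partial A i)"
proof -
  have "{..k} = insert 0 {1..<Suc k}" by auto
  then show ?thesis using assms by (simp add: mzv_term_0)
qed

lemma Gc_geom_sums:
  assumes A: "nz A" and w: "\<bar>w\<bar> < 1"
  shows "(\<lambda>n. mzv_partial A (Suc n) * w ^ n) sums (Gc A w / (1 - w))"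
proof (cases A)
  case Nil
  then show ?thesis using geometric_sums[of w] w by (simp add: divide_inverse)
next
  case (Cons t A')
  have t: "t \<noteq> 0" and A': "nz A'" using A Cons by auto
  let ?d = "\<lambda>j. mzv_term t j * mzv_partial A' j"
  have "(\<lambda>k. \<Sum>i\<le>k. (?d i * w ^ i) * w ^ (k - i)) sums ((\<Sum>k. ?d k * w ^ k) * (\<Sum>k. w ^ k))"
    by (rule Cauchy_product_sums[OF Gc_summable_norm[OF t A' w]])
       (use w in \<open>auto intro!: summable_geometric simp: power_abs\<close>)
  moreover have "(\<Sum>i\<le>k. (?d i * w ^ i) * w ^ (k - i)) = mzv_partial A (Suc k) * w ^ k" for k
  proof -
    have "(\<Sum>i\<le>k. (?d i * w ^ i) * w ^ (k - i)) = (\<Sum>i\<le>k. ?d i * w ^ k)"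
      by (intro sum.cong refl) (auto simp: mult.assoc simp flip: power_add)
    also have "\<dots> = mzv_partial A (Suc k) * w ^ k"
      using Cons mzv_partial_Suc_atMost[OF t] by (simp add: sum_distrib_right)
    finally show ?thesis .
  qed
  moreover have "(\<Sum>k. w ^ k) = 1 / (1 - w)" using suminf_geometric[of w] w by (simp add: divide_inverse)
  ultimately show ?thesis using Cons by simp
qed

lemma Gc_deriv_pm:
  assumes e: "e = 1 \<or> e = -1" and st: "\<And>n. mzv_term s n = e ^ n / real n"
    and s: "s \<noteq> 0" and A: "nz A" and z: "\<bar>z\<bar> < 1"
  shows "(Gc (s # A) has_field_derivative (e * (Gc A (e * z) / (1 - e * z)))) (at z)"
proof -
  define c where "c n = mzv_term s n * mzv_partial A n" for n
  have G: "Gc (s # A) = (\<lambda>z. \<Sum>n. c n * z ^ n)" by (rule ext) (simp add: c_def)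
  define K where "K = (1 + \<bar>z\<bar>) / 2"
  have K: "\<bar>K\<bar> < 1" "\<bar>z\<bar> < \<bar>K\<bar>" using z by (auto simp: K_def)
  have sm: "summable (\<lambda>n. c n * K ^ n)" unfolding c_def by (rule Gc_summable[OF s A K(1)])
  have D: "((\<lambda>z. \<Sum>n. c n * z ^ n) has_field_derivative (\<Sum>n. diffs c n * z ^ n)) (at z)"
    by (rule termdiffs_strong[OF sm]) (use K in simp)
  have e2: "\<bar>e\<bar> = 1" using e by auto
  have w: "\<bar>e * z\<bar> < 1" using z e2 by (simp add: abs_mult)
  have dc: "diffs c n * z ^ n = e * (mzv_partial A (Suc n) * (e * z) ^ n)" for n
    by (simp add: diffs_def c_def st power_mult_distrib del: of_nat_Suc)
  have "(\<lambda>n. diffs c n * z ^ n) sums (e * (Gc A (e * z) / (1 - e * z)))"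
    unfolding dc by (intro sums_mult Gc_geom_sums[OF A w])
  then have eq: "(\<Sum>n. diffs c n * z ^ n) = e * (Gc A (e * z) / (1 - e * z))" by (rule sums_unique[symmetric])
  show ?thesis using D[unfolded eq] unfolding G .
qed

lemma mzv_term_nat: "mzv_term (int a) n = 1 / real n ^ a"
  by (simp add: mzv_term_def)

lemma mzv_term_one: "mzv_term 1 n = 1 ^ n / real n"
  by (simp add: mzv_term_def)

lemma mzv_term_mone: "mzv_term (-1) n = (-1) ^ n / real n"
  by (simp add: mzv_term_def)

lemma Gc_deriv_pos:
  assumes a: "a \<ge> 1" and A: "nz A" and z: "\<bar>z\<bar> < 1" "z \<noteq> 0"
  shows "(Gc (int (Suc a) # A) has_field_derivative (Gc (int a # A) z / z)) (at z)"
proof -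
  define c where "c n = mzv_term (int (Suc a)) n * mzv_partial A n" for n
  have G: "Gc (int (Suc a) # A) = (\<lambda>z. \<Sum>n. c n * z ^ n)" by (rule ext) (simp add: c_def)
  define K where "K = (1 + \<bar>z\<bar>) / 2"
  have K: "\<bar>K\<bar> < 1" "\<bar>z\<bar> < \<bar>K\<bar>" using z by (auto simp: K_def)
  have sm: "summable (\<lambda>n. c n * K ^ n)" unfolding c_def by (rule Gc_summable[OF _ A K(1)]) simp
  have D: "((\<lambda>z. \<Sum>n. c n * z ^ n) has_field_derivative (\<Sum>n. diffs c n * z ^ n)) (at z)"
    by (rule termdiffs_strong[OF sm]) (use K in simp)
  define f where "f n = (mzv_term (int a) n * mzv_partial A n) * z ^ n" for n
  have a0: "int a \<noteq> 0" using a by simp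
  have sf: "summable f" unfolding f_def by (rule Gc_summable[OF a0 A z(1)])
  have f0: "f 0 = 0" by (simp add: f_def mzv_term_0[OF a0])
  have "(\<lambda>n. f (Suc n)) sums (suminf f)" using summable_sums[OF sf] f0 by (simp add: sums_Suc_iff)
  moreover have "f (Suc n) = z * (diffs c n * z ^ n)" for n
  proof -
    have "real (Suc n) * (1 / real (Suc n) ^ Suc a) = 1 / real (Suc n) ^ a"
      by (simp del: of_nat_Suc)
    then show ?thesis
      by (simp add: f_def diffs_def c_def mzv_term_nat del: of_nat_Suc)
  qed
  moreover have "suminf f = Gc (int a # A) z" by (simp add: f_def[abs_def])
  ultimately have "(\<lambda>n. z * (diffs c n * z ^ n)) sums (Gc (int a # A) z)" by simp
  then have "(\<lambda>n. diffs c n * z ^ n) sums (Gc (int a # A) z / z)"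
    using sums_divide[of "\<lambda>n. z * (diffs c n * z ^ n)" _ z] z(2) by simp
  then have eq: "(\<Sum>n. diffs c n * z ^ n) = Gc (int a # A) z / z" by (rule sums_unique[symmetric])
  show ?thesis using D[unfolded eq] unfolding G .
qed



lemma nz_rep[simp]: "nz (replicate k (1::int))" by (induct k) auto

definition lam :: "real \<Rightarrow> real" where "lam x = - ln (1 - x)"

lemma lam_0[simp]: "lam 0 = 0" by (simp add: lam_def)

lemma lam_deriv: "x < 1 \<Longrightarrow> (lam has_field_derivative (1 / (1 - x))) (at x within S)"
  unfolding lam_def[abs_def]
  by (auto intro!: derivative_eq_intros simp: field_simps)

lemma powfact_deriv:
  assumes "(g has_field_derivative g') (at x within S)"
  shows "((\<lambda>x. g x ^ Suc k / fact (Suc k)) has_field_derivative (g x ^ k / fact k * g')) (at x within S)"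
proof -
  have "((\<lambda>x. g x ^ Suc k / fact (Suc k)) has_field_derivative (of_nat (Suc k) * (g' * g x ^ (Suc k - Suc 0)) / fact (Suc k))) (at x within S)"
    by (intro DERIV_cdivide DERIV_power assms)
  moreover have "of_nat (Suc k) * (g' * g x ^ (Suc k - Suc 0)) / fact (Suc k) = g x ^ k / fact k * g'"
    by (simp add: fact_Suc del: of_nat_Suc)
  ultimately show ?thesis by simp
qed

lemma Gc_rep: "\<bar>z\<bar> < 1 \<Longrightarrow> Gc (replicate k 1) z = lam z ^ k / fact k"
proof (induction k arbitrary: z)
  case 0 then show ?case by simp
next
  case (Suc k)
  define f where "f t = Gc (1 # replicate k 1) t - lam t ^ Suc k / fact (Suc k)" for t
  have D: "(f has_field_derivative 0) (at t)" if t: "t \<in> {-1<..<1}" for t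
  proof -
    have t1: "\<bar>t\<bar> < 1" using t by auto
    have "(f has_field_derivative (1 * (Gc (replicate k 1) (1 * t) / (1 - 1 * t)) - lam t ^ k / fact k * (1 / (1 - t)))) (at t)"
      unfolding f_def[abs_def]
      by (intro DERIV_diff Gc_deriv_pm powfact_deriv lam_deriv) (use t1 in \<open>auto simp: mzv_term_one\<close>)
    then show ?thesis using Suc.IH[OF t1] by simp
  qed
  have "f z = f 0" by (rule DERIV_isconst3[of "-1" 1 z 0 f]) (use Suc.prems D in auto)
  then show ?case by (simp add: f_def mzv_term_0)
qed

definition Ch :: "nat \<Rightarrow> nat \<Rightarrow> int list" where
  "Ch k j = replicate j 1 @ (-1) # replicate k 1"

lemma nz_Ch: "nz (Ch k j)" by (simp add: Ch_def)

lemma Ch_Suc: "Ch k (Suc j) = 1 # Ch k j" by (simp add: Ch_def)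

definition FF :: "nat \<Rightarrow> nat \<Rightarrow> real \<Rightarrow> real" where
  "FF k j x = (-1) ^ j * Gc (Ch k j) (- x)"

lemma FF_0: "\<bar>x\<bar> < 1 \<Longrightarrow> FF k 0 x = lam x ^ Suc k / fact (Suc k)"
proof -
  assume x: "\<bar>x\<bar> < 1"
  define f where "f t = FF k 0 t - lam t ^ Suc k / fact (Suc k)" for t
  have D: "(f has_field_derivative 0) (at t)" if t: "t \<in> {-1<..<1}" for t
  proof -
    have t1: "\<bar>t\<bar> < 1" "\<bar>-t\<bar> < 1" using t by auto
    have "((\<lambda>t. Gc ((-1) # replicate k 1) (- t)) has_field_derivative
           ((-1) * (Gc (replicate k 1) ((-1) * (-t)) / (1 - (-1) * (-t)))) * (-1)) (at t)"
      by (rule DERIV_chain2[OF Gc_deriv_pm]) (use t1 in \<open>auto intro!: derivative_eq_intros simp: mzv_term_mone\<close>)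
    then have "(f has_field_derivative ((-1) * (Gc (replicate k 1) ((-1) * (-t)) / (1 - (-1) * (-t)))) * (-1)
         - lam t ^ k / fact k * (1 / (1 - t))) (at t)"
      unfolding f_def[abs_def] FF_def Ch_def
      by (intro DERIV_diff powfact_deriv lam_deriv) (use t1 in auto)
    then show ?thesis using Gc_rep[OF t1(1), of k] by simp
  qed
  have "f x = f 0" by (rule DERIV_isconst3[of "-1" 1 x 0 f]) (use x D in auto)
  then show ?thesis by (simp add: f_def FF_def Ch_def mzv_term_0)
qed

lemma FF_Suc_0: "FF k (Suc j) 0 = 0"
  unfolding FF_def Ch_Suc by (simp only: minus_zero Gc_zero)

lemma FF_deriv: "\<bar>x\<bar> < 1 \<Longrightarrow> (FF k (Suc j) has_field_derivative (FF k j x / (1 + x))) (at x)"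
proof -
  assume x: "\<bar>x\<bar> < 1"
  have x1: "\<bar>-x\<bar> < 1" using x by auto
  have "((\<lambda>t. Gc (1 # Ch k j) (- t)) has_field_derivative
         (1 * (Gc (Ch k j) (1 * (-x)) / (1 - 1 * (-x)))) * (-1)) (at x)"
    by (rule DERIV_chain2[OF Gc_deriv_pm]) (use x1 nz_Ch in \<open>auto intro!: derivative_eq_intros simp: mzv_term_one\<close>)
  then have "((\<lambda>t. (-1) ^ Suc j * Gc (1 # Ch k j) (- t)) has_field_derivative
         (-1) ^ Suc j * ((1 * (Gc (Ch k j) (1 * (-x)) / (1 - 1 * (-x)))) * (-1))) (at x)"
    by (rule DERIV_cmult)
  then show ?thesis unfolding FF_def[abs_def] Ch_Suc by (simp add: field_simps)
qed

definition LL :: "nat \<Rightarrow> nat \<Rightarrow> real \<Rightarrow> real" where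
  "LL m a y = Gc (int a # replicate m 1) y"

lemma LL_1: "\<bar>y\<bar> < 1 \<Longrightarrow> LL m 1 y = lam y ^ Suc m / fact (Suc m)"
  using Gc_rep[of y "Suc m"] by (simp add: LL_def)

lemma LL_deriv: "a \<ge> 1 \<Longrightarrow> \<bar>y\<bar> < 1 \<Longrightarrow> y \<noteq> 0 \<Longrightarrow> (LL m (Suc a) has_field_derivative (LL m a y / y)) (at y)"
  unfolding LL_def[abs_def] by (rule Gc_deriv_pos) auto

lemma Gc_neg: "nz A \<Longrightarrow> Gc ((-1) # A) x = Gc (1 # A) (- x)"
  by (simp add: mzv_term_mone mzv_term_one power_minus' field_simps)



definition al :: "nat \<Rightarrow> real \<Rightarrow> real" where "al j x = lam ((1 - x) / 2) ^ j / fact j"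
definition be :: "nat \<Rightarrow> real \<Rightarrow> real" where "be p x = lam x ^ p / fact p"

definition KK :: "nat \<Rightarrow> nat \<Rightarrow> real \<Rightarrow> real" where
  "KK k m x = (\<Sum>j\<le>m. al j x * FF k (m + 1 - j) x) + (\<Sum>i\<le>k+1. LL m (i + 1) ((1 - x) / 2) * be (k + 1 - i) x)"

lemma al_0[simp]: "al 0 x = 1" by (simp add: al_def)
lemma be_0[simp]: "be 0 x = 1" by (simp add: be_def)

lemma al_deriv: "\<bar>x\<bar> < 1 \<Longrightarrow> (al (Suc j) has_field_derivative (- al j x / (1 + x))) (at x)"
proof -
  assume x: "\<bar>x\<bar> < 1"
  have y: "(1 - x) / 2 < 1" using x by auto
  have g: "((\<lambda>x. lam ((1 - x) / 2)) has_field_derivative (1 / (1 - (1 - x) / 2)) * (- 1 / 2)) (at x)"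
    by (rule DERIV_chain2[where f=lam and g="\<lambda>x. (1 - x) / 2", OF lam_deriv[OF y]]) (auto intro!: derivative_eq_intros)
  have e: "(1 / (1 - (1 - x) / 2)) * (- 1 / 2) = - 1 / (1 + x)" using x by (simp add: field_simps)
  show ?thesis using powfact_deriv[OF g[unfolded e], of j] unfolding al_def[abs_def] by simp
qed

lemma be_deriv: "\<bar>x\<bar> < 1 \<Longrightarrow> (be (Suc p) has_field_derivative (be p x / (1 - x))) (at x)"
proof -
  assume x: "\<bar>x\<bar> < 1"
  show ?thesis using powfact_deriv[OF lam_deriv[of x UNIV], of p] x unfolding be_def[abs_def] by simp
qed

lemma LLy_deriv:
  assumes a: "a \<ge> 1" and x: "\<bar>x\<bar> < 1"
  shows "((\<lambda>x. LL m (Suc a) ((1 - x) / 2)) has_field_derivative (- LL m a ((1 - x) / 2) / (1 - x))) (at x)"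
proof -
  have y: "\<bar>(1 - x) / 2\<bar> < 1" "(1 - x) / 2 \<noteq> 0" using x by auto
  have "((\<lambda>x. LL m (Suc a) ((1 - x) / 2)) has_field_derivative (LL m a ((1 - x) / 2) / ((1 - x) / 2)) * (- 1 / 2)) (at x)"
    by (rule DERIV_chain2[where f="LL m (Suc a)" and g="\<lambda>x. (1 - x) / 2", OF LL_deriv[OF a y]]) (auto intro!: derivative_eq_intros)
  moreover have "(LL m a ((1 - x) / 2) / ((1 - x) / 2)) * (- 1 / 2) = - LL m a ((1 - x) / 2) / (1 - x)"
    using x by (simp add: field_simps)
  ultimately show ?thesis by simp
qed

lemma LL1y: "\<bar>x\<bar> < 1 \<Longrightarrow> LL m 1 ((1 - x) / 2) = al (Suc m) x"
  by (subst LL_1) (auto simp: al_def)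

lemma LL1y_deriv:
  assumes x: "\<bar>x\<bar> < 1"
  shows "((\<lambda>x. LL m 1 ((1 - x) / 2)) has_field_derivative (- al m x / (1 + x))) (at x)"
proof -
  show ?thesis
  proof (rule has_field_derivative_transform_within_open[of "al (Suc m)" _ _ "{-1<..<1}"])
    show "(al (Suc m) has_real_derivative - al m x / (1 + x)) (at x)" using al_deriv[OF x] .
    show "\<And>t. t \<in> {-1<..<1} \<Longrightarrow> al (Suc m) t = LL m 1 ((1 - t) / 2)"
    proof -
      fix t :: real assume "t \<in> {-1<..<1}"
      then have "\<bar>t\<bar> < 1" by auto
      from LL1y[OF this, of m] show "al (Suc m) t = LL m 1 ((1 - t) / 2)" by simp
    qed
  qed (use x in auto)
qed

lemma telescope_if: "(\<Sum>j\<le>(n::nat). (f j - (if j = 0 then 0 else f (j - 1)))) = (f n :: real)"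
  by (induction n) auto



lemma aux_div: "(d::real) \<noteq> 0 \<Longrightarrow> (- a / d) * F1 + (F0 / d) * b = (b * F0 - a * F1) / d"
  by (simp add: field_simps)

lemma KK_deriv:
  assumes x: "\<bar>x\<bar> < 1"
  shows "(KK k m has_field_derivative 0) (at x)"
proof -
  define y where "y = (1 - x) / 2"
  have x1: "1 + x > 0" "1 - x > 0" using x by auto
  define \<phi> where "\<phi> j = al j x * FF k (m - j) x" for j
  have D1: "((\<lambda>x. al j x * FF k (m + 1 - j) x) has_field_derivative
             (\<phi> j - (if j = 0 then 0 else \<phi> (j - 1))) / (1 + x)) (at x)" if j: "j \<in> {..m}" for j
  proof (cases j)
    case 0
    have "(FF k (Suc m) has_field_derivative FF k m x / (1 + x)) (at x)" by (rule FF_deriv[OF x])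
    then show ?thesis using 0 by (simp add: \<phi>_def)
  next
    case (Suc i)
    have im: "m + 1 - j = Suc (m - j)" "m - i = Suc (m - j)" using j Suc by auto
    have "((\<lambda>x. al (Suc i) x * FF k (Suc (m - j)) x) has_field_derivative
      (- al i x / (1 + x)) * FF k (Suc (m - j)) x + (FF k (m - j) x / (1 + x)) * al (Suc i) x) (at x)"
      by (intro DERIV_mult al_deriv FF_deriv x)
    moreover have "(- al i x / (1 + x)) * FF k (Suc (m - j)) x + (FF k (m - j) x / (1 + x)) * al (Suc i) x
        = (\<phi> j - (if j = 0 then 0 else \<phi> (j - 1))) / (1 + x)"
    proof -
      have e1: "\<phi> j = al (Suc i) x * FF k (m - j) x" using Suc by (simp add: \<phi>_def)
      have e2: "(if j = 0 then 0 else \<phi> (j - 1)) = al i x * FF k (Suc (m - j)) x"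
        using Suc im by (simp add: \<phi>_def)
      show ?thesis unfolding e1 e2 using x1 by (intro aux_div) simp
    qed
    ultimately show ?thesis using Suc im by simp
  qed
  define \<psi> where "\<psi> i = (if i \<le> k then LL m (i + 1) y * be (k - i) x else 0)" for i
  define A where "A = - al m x * be (Suc k) x / (1 + x)"
  have D2: "((\<lambda>x. LL m (i + 1) ((1 - x) / 2) * be (k + 1 - i) x) has_field_derivative
             (if i = 0 then A else 0) + (\<psi> i - (if i = 0 then 0 else \<psi> (i - 1))) / (1 - x)) (at x)"
    if i: "i \<in> {..k+1}" for i
  proof -
    consider "i = 0" | i' where "i = Suc i'" "i \<le> k" | "i = k + 1"
    proof (cases i)
      case (Suc i')
      then show ?thesis using that i by (cases "i \<le> k") auto
    qed (use that in auto)
    then show ?thesis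
    proof cases
      case 1
      have "((\<lambda>x. LL m 1 ((1 - x) / 2) * be (Suc k) x) has_field_derivative
        (- al m x / (1 + x)) * be (Suc k) x + (be k x / (1 - x)) * LL m 1 ((1 - x) / 2)) (at x)"
        by (intro DERIV_mult LL1y_deriv be_deriv x)
      moreover have "(- al m x / (1 + x)) * be (Suc k) x + (be k x / (1 - x)) * LL m 1 ((1 - x) / 2)
          = (if i = 0 then A else 0) + (\<psi> i - (if i = 0 then 0 else \<psi> (i - 1))) / (1 - x)"
        using 1 x1 by (simp add: \<psi>_def A_def y_def field_simps)
      ultimately show ?thesis using 1 by simp
    next
      case 2
      have ki: "k + 1 - i = Suc (k - i)" "k - i' = Suc (k - i)" using 2 by auto
      have "((\<lambda>x. LL m (Suc (Suc i')) ((1 - x) / 2) * be (Suc (k - i)) x) has_field_derivative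
        (- LL m (Suc i') ((1 - x) / 2) / (1 - x)) * be (Suc (k - i)) x + (be (k - i) x / (1 - x)) * LL m (Suc (Suc i')) ((1 - x) / 2)) (at x)"
        by (intro DERIV_mult LLy_deriv be_deriv x) simp
      moreover have "(- LL m (Suc i') ((1 - x) / 2) / (1 - x)) * be (Suc (k - i)) x + (be (k - i) x / (1 - x)) * LL m (Suc (Suc i')) ((1 - x) / 2)
          = (if i = 0 then A else 0) + (\<psi> i - (if i = 0 then 0 else \<psi> (i - 1))) / (1 - x)"
      proof -
        have e1: "\<psi> i = LL m (Suc (Suc i')) ((1 - x) / 2) * be (k - i) x" using 2 by (simp add: \<psi>_def y_def)
        have e2: "(if i = 0 then 0 else \<psi> (i - 1)) = LL m (Suc i') ((1 - x) / 2) * be (Suc (k - i)) x"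
          using 2 ki by (simp add: \<psi>_def y_def)
        have e3: "(if i = 0 then A else 0) = 0" using 2 by simp
        show ?thesis unfolding e1 e2 e3 using x1 by (simp only: add_0_left, intro aux_div) simp
      qed
      ultimately show ?thesis using 2 ki by simp
    next
      case 3
      have "((\<lambda>x. LL m (Suc (Suc k)) ((1 - x) / 2)) has_field_derivative
        (- LL m (Suc k) ((1 - x) / 2) / (1 - x))) (at x)"
        by (intro LLy_deriv x) simp
      moreover have "- LL m (Suc k) ((1 - x) / 2) / (1 - x)
          = (if i = 0 then A else 0) + (\<psi> i - (if i = 0 then 0 else \<psi> (i - 1))) / (1 - x)"
        using 3 x1 by (simp add: \<psi>_def y_def field_simps)
      ultimately show ?thesis using 3 by simp
    qed
  qed
  have DS: "(KK k m has_field_derivative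
     (\<Sum>j\<le>m. (\<phi> j - (if j = 0 then 0 else \<phi> (j - 1))) / (1 + x)) +
     (\<Sum>i\<le>k+1. (if i = 0 then A else 0) + (\<psi> i - (if i = 0 then 0 else \<psi> (i - 1))) / (1 - x))) (at x)"
    unfolding KK_def[abs_def] by (intro DERIV_add DERIV_sum D1 D2)
  have S1: "(\<Sum>j\<le>m. (\<phi> j - (if j = 0 then 0 else \<phi> (j - 1))) / (1 + x)) = \<phi> m / (1 + x)"
    by (simp only: sum_divide_distrib[symmetric] telescope_if)
  have S2: "(\<Sum>i\<le>k+1. (if i = 0 then A else 0) + (\<psi> i - (if i = 0 then 0 else \<psi> (i - 1))) / (1 - x)) = A + \<psi> (k+1) / (1 - x)"
    by (simp only: sum.distrib sum_divide_distrib[symmetric] telescope_if) simp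
  have "\<phi> m / (1 + x) + (A + \<psi> (k+1) / (1 - x)) = 0"
    using FF_0[OF x, of k] by (simp add: \<phi>_def A_def \<psi>_def be_def)
  then show ?thesis using DS S1 S2 by simp
qed

lemma KK_const:
  assumes x: "\<bar>x\<bar> < 1"
  shows "KK k m x = LL m (k + 2) (1 / 2)"
proof -
  have "KK k m x = KK k m 0"
    by (rule DERIV_isconst3[of "-1" 1]) (use x KK_deriv in auto)
  also have "KK k m 0 = LL m (k + 2) (1 / 2)"
  proof -
    have "(\<Sum>j\<le>m. al j 0 * FF k (m + 1 - j) 0) = 0"
    proof (intro sum.neutral ballI)
      fix j assume "j \<in> {..m}"
      then have "m + 1 - j = Suc (m - j)" by auto
      then show "al j 0 * FF k (m + 1 - j) 0 = 0" by (simp add: FF_Suc_0)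
    qed
    moreover have "(\<Sum>i\<le>k. LL m (i + 1) ((1 - 0) / 2) * be (k + 1 - i) 0) = 0"
    proof (intro sum.neutral ballI)
      fix i assume "i \<in> {..k}"
      then have "k + 1 - i = Suc (k - i)" by auto
      then show "LL m (i + 1) ((1 - 0) / 2) * be (k + 1 - i) 0 = 0" by (simp add: be_def)
    qed
    ultimately show ?thesis by (simp add: KK_def)
  qed
  finally show ?thesis .
qed



lemma mzv_partial_rep_nonneg: "mzv_partial (replicate m 1) n \<ge> 0"
proof (induction m arbitrary: n)
  case 0 then show ?case by simp
next
  case (Suc m)
  show ?case using Suc by (auto intro!: sum_nonneg mult_nonneg_nonneg simp: mzv_term_def)
qed

lemma lam_nonneg: "0 \<le> x \<Longrightarrow> x < 1 \<Longrightarrow> lam x \<ge> 0"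
  by (simp add: lam_def)

lemma lam_le: "0 \<le> y \<Longrightarrow> y \<le> 1/2 \<Longrightarrow> lam y \<le> 2 * y"
proof -
  assume y: "0 \<le> y" "y \<le> 1/2"
  have "lam y = ln (1 / (1 - y))" using y by (simp add: lam_def ln_div)
  also have "\<dots> \<le> 1 / (1 - y) - 1" using y by (intro ln_le_minus_one) auto
  also have "\<dots> = y / (1 - y)" using y by (simp add: field_simps)
  also have "\<dots> \<le> 2 * y" using y mult_left_mono[of "y*2" 1 y] by (simp add: field_simps)
  finally show ?thesis .
qed

lemma LL_nonneg: "a \<ge> 1 \<Longrightarrow> 0 \<le> y \<Longrightarrow> y < 1 \<Longrightarrow> LL m a y \<ge> 0"
proof -
  assume a: "a \<ge> 1" and y: "0 \<le> y" "y < 1"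
  have a0: "int a \<noteq> 0" using a by simp
  show ?thesis unfolding LL_def Gc.simps
    by (intro suminf_nonneg Gc_summable[OF a0 nz_rep]) (use y in \<open>auto intro!: divide_nonneg_nonneg mult_nonneg_nonneg mzv_partial_rep_nonneg simp: mzv_term_nat\<close>)
qed

lemma LL_le_1: "a \<ge> 1 \<Longrightarrow> 0 \<le> y \<Longrightarrow> y < 1 \<Longrightarrow> LL m a y \<le> LL m 1 y"
proof -
  assume a: "a \<ge> 1" and y: "0 \<le> y" "y < 1"
  have a0: "int a \<noteq> 0" using a by simp
  have y1: "\<bar>y\<bar> < 1" using y by auto
  show ?thesis unfolding LL_def Gc.simps
  proof (intro suminf_le allI Gc_summable[OF a0 nz_rep y1])
    fix n :: nat
    have "1 / real n ^ a \<le> 1 / real n ^ 1"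
    proof (cases "n = 0")
      case False
      then show ?thesis using a by (intro divide_left_mono power_increasing) auto
    qed (use a in \<open>simp add: power_0_left\<close>)
    then show "mzv_term (int a) n * mzv_partial (replicate m 1) n * y ^ n \<le> mzv_term (int 1) n * mzv_partial (replicate m 1) n * y ^ n"
      using y by (intro mult_right_mono mzv_partial_rep_nonneg) (auto simp: mzv_term_nat mzv_term_def)
  qed (rule Gc_summable[OF _ nz_rep y1], simp)
qed

lemma FF_nonneg: "0 \<le> x \<Longrightarrow> x < 1 \<Longrightarrow> FF k j x \<ge> 0"
proof (induction j arbitrary: x)
  case 0
  then show ?case using FF_0[of x k] lam_nonneg[of x] by simp
next
  case (Suc j)
  show ?case
  proof (cases "x = 0")
    case True then show ?thesis by (simp add: FF_Suc_0)
  next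
    case False
    then have x: "0 < x" "x < 1" using Suc.prems by auto
    have "FF k (Suc j) 0 \<le> FF k (Suc j) x"
    proof (rule DERIV_nonneg_imp_increasing_open[of 0 x "FF k (Suc j)"])
      show "\<exists>y. DERIV (FF k (Suc j)) t :> y \<and> y \<ge> 0" if "0 < t" "t < x" for t
      proof -
        have "\<bar>t\<bar> < 1" using that x by auto
        then have "DERIV (FF k (Suc j)) t :> FF k j t / (1 + t)" by (rule FF_deriv)
        moreover have "FF k j t / (1 + t) \<ge> 0" using Suc.IH[of t] that x by auto
        ultimately show ?thesis by blast
      qed
      show "continuous_on {0..x} (FF k (Suc j))"
      proof (rule DERIV_continuous_on)
        fix t assume "t \<in> {0..x}"
        then have "\<bar>t\<bar> < 1" using x by auto
        then show "(FF k (Suc j) has_field_derivative (FF k j t / (1 + t))) (at t within {0..x})"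
          by (rule has_field_derivative_at_within[OF FF_deriv])
      qed
    qed (use x in auto)
    then show ?thesis by (simp add: FF_Suc_0)
  qed
qed

lemma al_nonneg: "0 \<le> x \<Longrightarrow> x < 1 \<Longrightarrow> al j x \<ge> 0"
  unfolding al_def by (intro divide_nonneg_pos zero_le_power lam_nonneg) auto

lemma be_nonneg: "0 \<le> x \<Longrightarrow> x < 1 \<Longrightarrow> be j x \<ge> 0"
  unfolding be_def by (intro divide_nonneg_pos zero_le_power lam_nonneg) auto

lemma FF_bound: "0 \<le> x \<Longrightarrow> x < 1 \<Longrightarrow> FF k (Suc j) x \<le> LL j (k + 2) (1 / 2)"
proof -
  assume x: "0 \<le> x" "x < 1"
  have y: "0 \<le> (1 - x) / 2" "(1 - x) / 2 < 1" using x by auto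
  have "FF k (Suc j) x = al 0 x * FF k (j + 1 - 0) x" by simp
  also have "\<dots> \<le> (\<Sum>j'\<le>j. al j' x * FF k (j + 1 - j') x)"
  proof (rule member_le_sum[of 0 "{..j}" "\<lambda>j'. al j' x * FF k (j + 1 - j') x"])
    fix j' assume "j' \<in> {..j} - {0}"
    show "0 \<le> al j' x * FF k (j + 1 - j') x"
      using al_nonneg[OF x, of j'] FF_nonneg[OF x, of k "j + 1 - j'"] by simp
  qed auto
  also have "\<dots> \<le> KK k j x" unfolding KK_def
  proof (intro add_increasing2 sum_nonneg)
    fix i assume "i \<in> {..k+1}"
    have "LL j (i + 1) ((1 - x) / 2) \<ge> 0" by (rule LL_nonneg) (use y in auto)
    then show "0 \<le> LL j (i + 1) ((1 - x) / 2) * be (k + 1 - i) x"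
      using be_nonneg[OF x] by simp
  qed simp
  also have "\<dots> = LL j (k + 2) (1 / 2)" by (rule KK_const) (use x in auto)
  finally show ?thesis .
qed



lemma lam_at_top: "filterlim lam at_top (at_left 1)"
  unfolding lam_def[abs_def] by real_asymp

lemma lam_y_lim: "((\<lambda>x. lam ((1 - x) / 2)) \<longlongrightarrow> 0) (at_left 1)"
  unfolding lam_def[abs_def] by real_asymp

lemma one_minus_lam_pow: "((\<lambda>x. (1 - x) * lam x ^ p) \<longlongrightarrow> 0) (at_left 1)"
proof -
  have "((\<lambda>x. lam x ^ p / exp (lam x)) \<longlongrightarrow> 0) (at_left 1)"
    using filterlim_compose[OF tendsto_power_div_exp_0[of p] lam_at_top] .
  moreover have "eventually (\<lambda>x. lam x ^ p / exp (lam x) = (1 - x) * lam x ^ p) (at_left 1)"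
  proof -
    have "eventually (\<lambda>x. x \<in> {0<..<1}) (at_left (1::real))" by (rule eventually_at_left_real) simp
    then show ?thesis
    proof eventually_elim
      case (elim x)
      then have "exp (lam x) = 1 / (1 - x)" by (simp add: lam_def exp_minus inverse_eq_divide)
      then show ?case by simp
    qed
  qed
  ultimately show ?thesis by (rule Lim_transform_eventually)
qed

lemma al_lim: "j \<ge> 1 \<Longrightarrow> ((\<lambda>x. al j x) \<longlongrightarrow> 0) (at_left 1)"
proof -
  assume j: "j \<ge> 1"
  have "((\<lambda>x. lam ((1 - x) / 2) ^ j / fact j) \<longlongrightarrow> 0 ^ j / fact j) (at_left 1)"
    by (intro tendsto_divide tendsto_power lam_y_lim) auto
  then show ?thesis using j by (simp add: al_def[abs_def] power_0_left)
qed

lemma FF_lim: "((\<lambda>x. FF k (Suc m) x) \<longlongrightarrow> LL m (k + 2) (1 / 2)) (at_left 1)"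
proof -
  define L where "L = LL m (k + 2) (1 / 2)"
  define R1 where "R1 x = (\<Sum>j\<le>m. (if j = 0 then 0 else al j x * FF k (m + 1 - j) x))" for x
  define R2 where "R2 x = (\<Sum>i\<le>k+1. LL m (i + 1) ((1 - x) / 2) * be (k + 1 - i) x)" for x
  have ev01: "eventually (\<lambda>x. x \<in> {0<..<1}) (at_left (1::real))" by (rule eventually_at_left_real) simp
  have eq: "eventually (\<lambda>x. L - R1 x - R2 x = FF k (Suc m) x) (at_left 1)"
    using ev01
  proof eventually_elim
    case (elim x)
    then have x: "\<bar>x\<bar> < 1" by auto
    have s: "(\<Sum>j\<le>m. al j x * FF k (m + 1 - j) x) = FF k (Suc m) x + R1 x"
    proof -
      have "(\<Sum>j\<le>m. al j x * FF k (m + 1 - j) x) =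
            (\<Sum>j\<le>m. (if j = 0 then al j x * FF k (m + 1 - j) x else 0) + (if j = 0 then 0 else al j x * FF k (m + 1 - j) x))"
        by (intro sum.cong) auto
      also have "\<dots> = FF k (Suc m) x + R1 x" by (simp only: sum.distrib R1_def) simp
      finally show ?thesis .
    qed
    have "KK k m x = L" using KK_const[OF x] by (simp add: L_def)
    then show ?case unfolding KK_def s R2_def[symmetric] by simp
  qed
  have R1: "(R1 \<longlongrightarrow> 0) (at_left 1)"
    unfolding R1_def[abs_def]
  proof (rule tendsto_null_sum)
    fix j assume j: "j \<in> {..m}"
    show "((\<lambda>x. if j = 0 then 0 else al j x * FF k (m + 1 - j) x) \<longlongrightarrow> 0) (at_left 1)"
    proof (cases "j = 0")
      case False
      define C where "C = LL (m - j) (k + 2) (1 / 2)"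
      have mj: "m + 1 - j = Suc (m - j)" using j by auto
      have "((\<lambda>x. al j x * FF k (m + 1 - j) x) \<longlongrightarrow> 0) (at_left 1)"
      proof (rule Lim_null_comparison)
        show "eventually (\<lambda>x. norm (al j x * FF k (m + 1 - j) x) \<le> al j x * C) (at_left 1)"
          using ev01
        proof eventually_elim
          case (elim x)
          then have x: "0 \<le> x" "x < 1" by auto
          have "norm (al j x * FF k (m + 1 - j) x) = al j x * FF k (m + 1 - j) x"
            using al_nonneg[OF x, of j] FF_nonneg[OF x, of k "m + 1 - j"] by simp
          also have "\<dots> \<le> al j x * C"
            using al_nonneg[OF x, of j] FF_bound[OF x, of k "m - j"] mj by (intro mult_left_mono) (auto simp: C_def)
          finally show ?case .
        qed
        have "((\<lambda>x. al j x * C) \<longlongrightarrow> 0 * C) (at_left 1)"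
          using False by (intro tendsto_mult al_lim tendsto_const) auto
        then show "((\<lambda>x. al j x * C) \<longlongrightarrow> 0) (at_left 1)" by simp
      qed
      then show ?thesis using False by simp
    qed simp
  qed
  have R2: "(R2 \<longlongrightarrow> 0) (at_left 1)"
    unfolding R2_def[abs_def]
  proof (rule tendsto_null_sum)
    fix i assume i: "i \<in> {..k+1}"
    define p where "p = k + 1 - i"
    define g where "g x = ((1 - x) * lam x ^ p) * (lam ((1 - x) / 2) ^ m / (fact (Suc m) * fact p))" for x
    show "((\<lambda>x. LL m (i + 1) ((1 - x) / 2) * be (k + 1 - i) x) \<longlongrightarrow> 0) (at_left 1)"
    proof (rule Lim_null_comparison)
      show "eventually (\<lambda>x. norm (LL m (i + 1) ((1 - x) / 2) * be (k + 1 - i) x) \<le> g x) (at_left 1)"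
        using ev01
      proof eventually_elim
        case (elim x)
        then have x: "0 \<le> x" "x < 1" and x1: "\<bar>x\<bar> < 1" by auto
        define y where "y = (1 - x) / 2"
        have y: "0 \<le> y" "y < 1" "y \<le> 1/2" using x by (auto simp: y_def)
        have LLn: "LL m (i + 1) y \<ge> 0" by (rule LL_nonneg) (use y in auto)
        have ly: "lam y \<ge> 0" "lam y \<le> 1 - x" using lam_nonneg[of y] lam_le[of y] y by (auto simp: y_def)
        have "LL m (i + 1) y \<le> LL m 1 y" by (rule LL_le_1) (use y in auto)
        also have "\<dots> = lam y * (lam y ^ m / fact (Suc m))" using LL_1[of y m] y by simp
        also have "\<dots> \<le> (1 - x) * (lam y ^ m / fact (Suc m))"
          using ly by (intro mult_right_mono divide_nonneg_pos zero_le_power) auto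
        finally have LLb: "LL m (i + 1) y \<le> (1 - x) * (lam y ^ m / fact (Suc m))" .
        have ben: "be p x \<ge> 0" by (rule be_nonneg[OF x])
        have "norm (LL m (i + 1) y * be p x) = LL m (i + 1) y * be p x" using LLn ben by simp
        also have "\<dots> \<le> (1 - x) * (lam y ^ m / fact (Suc m)) * be p x"
          using LLb ben by (rule mult_right_mono)
        also have "\<dots> = g x" by (simp add: g_def be_def y_def)
        finally show ?case by (simp add: y_def p_def)
      qed
      have "(g \<longlongrightarrow> 0 * (0 ^ m / (fact (Suc m) * fact p))) (at_left 1)"
        unfolding g_def[abs_def] by (intro tendsto_mult one_minus_lam_pow tendsto_divide tendsto_power lam_y_lim tendsto_const) auto
      then show "(g \<longlongrightarrow> 0) (at_left 1)" by simp
    qed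
  qed
  have "((\<lambda>x. L - R1 x - R2 x) \<longlongrightarrow> L - 0 - 0) (at_left 1)"
    by (intro tendsto_diff tendsto_const R1 R2)
  then have "((\<lambda>x. L - R1 x - R2 x) \<longlongrightarrow> L) (at_left 1)" by simp
  then show ?thesis unfolding L_def[symmetric] by (rule Lim_transform_eventually[OF _ eq])
qed



lemma abel_thm:
  fixes a :: "nat \<Rightarrow> real"
  assumes as: "a sums s"
  shows "((\<lambda>x. \<Sum>n. a n * x ^ n) \<longlongrightarrow> s) (at_left 1)"
proof -
  define S where "S n = (\<Sum>i\<le>n. a i)" for n
  define e where "e n = S n - s" for n
  have "(\<lambda>n. \<Sum>i<Suc n. a i) \<longlonglongrightarrow> s" using as unfolding sums_def by (rule LIMSEQ_Suc)
  then have Slim: "S \<longlonglongrightarrow> s" by (simp add: S_def[abs_def] lessThan_Suc_atMost)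
  have elim: "e \<longlonglongrightarrow> 0" unfolding e_def using tendsto_diff[OF Slim tendsto_const[of s]] by simp
  obtain Be where Be: "Be > 0" "\<And>n. norm (e n) \<le> Be" using convergent_imp_Bseq[OF convergentI[OF elim]] by (auto simp: Bseq_def)
  have sa1: "summable (\<lambda>n. a n * 1 ^ n)" using as by (simp add: sums_iff)
  have key: "(\<Sum>n. a n * x ^ n) = (1 - x) * (\<Sum>n. e n * x ^ n) + s" if x: "0 \<le> x" "x < 1" for x
  proof -
    have nx: "norm x < norm (1::real)" using x by simp
    have sa: "summable (\<lambda>n. norm (a n * x ^ n))" by (rule powser_insidea[OF sa1 nx])
    have sg: "summable (\<lambda>n. norm (x ^ n))" using x summable_geometric[of x] by (simp add: power_abs)
    have se: "summable (\<lambda>n. e n * x ^ n)"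
    proof (rule summable_comparison_test[OF _ summable_mult[OF summable_geometric[of x], of Be]])
      show "\<exists>N. \<forall>n\<ge>N. norm (e n * x ^ n) \<le> Be * x ^ n"
        using Be x by (intro exI[of _ 0] allI impI) (auto simp: abs_mult power_abs intro!: mult_right_mono)
    qed (use x in auto)
    have "(\<lambda>k. \<Sum>i\<le>k. (a i * x ^ i) * x ^ (k - i)) sums ((\<Sum>n. a n * x ^ n) * (\<Sum>n. x ^ n))"
      by (rule Cauchy_product_sums[OF sa sg])
    moreover have "(\<Sum>i\<le>k. (a i * x ^ i) * x ^ (k - i)) = S k * x ^ k" for k
    proof -
      have "(\<Sum>i\<le>k. (a i * x ^ i) * x ^ (k - i)) = (\<Sum>i\<le>k. a i * x ^ k)"
        by (intro sum.cong refl) (auto simp: mult.assoc simp flip: power_add)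
      then show ?thesis by (simp add: S_def sum_distrib_right)
    qed
    ultimately have s1: "(\<lambda>k. S k * x ^ k) sums ((\<Sum>n. a n * x ^ n) / (1 - x))"
      using suminf_geometric[of x] x by (simp add: divide_inverse)
    have s2: "(\<lambda>k. S k * x ^ k) sums ((\<Sum>n. e n * x ^ n) + s / (1 - x))"
    proof -
      have "(\<lambda>k. e k * x ^ k + s * x ^ k) sums ((\<Sum>n. e n * x ^ n) + s * (1 / (1 - x)))"
        using x by (intro sums_add summable_sums[OF se] sums_mult geometric_sums) auto
      moreover have "e k * x ^ k + s * x ^ k = S k * x ^ k" for k by (simp add: e_def algebra_simps)
      ultimately show ?thesis by simp
    qed
    have "(\<Sum>n. a n * x ^ n) / (1 - x) = (\<Sum>n. e n * x ^ n) + s / (1 - x)"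
      using sums_unique2[OF s1 s2] .
    then show ?thesis using x by (simp add: field_simps)
  qed
  have F0: "((\<lambda>x. (1 - x) * (\<Sum>n. e n * x ^ n)) \<longlongrightarrow> 0) (at_left 1)"
  proof (rule tendstoI)
    fix \<epsilon> :: real assume \<epsilon>: "\<epsilon> > 0"
    obtain N where N: "\<And>n. n \<ge> N \<Longrightarrow> norm (e n) < \<epsilon> / 2"
      using LIMSEQ_D[OF elim, of "\<epsilon> / 2"] \<epsilon> by auto
    define M where "M = (\<Sum>k<N. \<bar>e k\<bar>)"
    have M0: "M \<ge> 0" by (simp add: M_def sum_nonneg)
    define \<delta> where "\<delta> = \<epsilon> / (2 * (M + 1))"
    have \<delta>: "\<delta> > 0" using \<epsilon> M0 by (simp add: \<delta>_def)
    have "eventually (\<lambda>x. x \<in> {max 0 (1 - \<delta>)<..<1}) (at_left (1::real))"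
      by (rule eventually_at_left_real) (use \<delta> in auto)
    then show "eventually (\<lambda>x. dist ((1 - x) * (\<Sum>n. e n * x ^ n)) 0 < \<epsilon>) (at_left 1)"
    proof eventually_elim
      case (elim x)
      then have x: "0 < x" "x < 1" "1 - x < \<delta>" by auto
      define g where "g k = (if k < N then \<bar>e k\<bar> else 0) + \<epsilon> / 2 * x ^ k" for k
      have sn: "summable (\<lambda>n. norm (e n * x ^ n))"
      proof (rule summable_comparison_test[OF _ summable_mult[OF summable_geometric[of x], of Be]])
        show "\<exists>N. \<forall>n\<ge>N. norm (norm (e n * x ^ n)) \<le> Be * x ^ n"
          using Be x by (intro exI[of _ 0] allI impI) (auto simp: abs_mult power_abs intro!: mult_right_mono)
      qed (use x in auto)
      have sg: "g sums (M + \<epsilon> / 2 * (1 / (1 - x)))"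
        unfolding g_def[abs_def] M_def
      proof (intro sums_add sums_mult geometric_sums)
        show "(\<lambda>n. if n < N then \<bar>e n\<bar> else 0) sums (\<Sum>k<N. \<bar>e k\<bar>)"
          using sums_If_finite_set[of "{..<N}" "\<lambda>k. \<bar>e k\<bar>"] by (simp add: lessThan_def)
      qed (use x in auto)
      have gle: "norm (e n * x ^ n) \<le> g n" for n
      proof (cases "n < N")
        case True
        have "norm (e n * x ^ n) = \<bar>e n\<bar> * x ^ n" using x by (simp add: abs_mult power_abs)
        also have "\<dots> \<le> \<bar>e n\<bar> * 1" using x by (intro mult_left_mono power_le_one) auto
        moreover have "0 \<le> \<epsilon> / 2 * x ^ n" using x \<epsilon> by simp
        ultimately show ?thesis using True by (simp add: g_def)
      next
        case False
        have "norm (e n * x ^ n) = \<bar>e n\<bar> * x ^ n" using x by (simp add: abs_mult power_abs)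
        also have "\<dots> \<le> \<epsilon> / 2 * x ^ n" using N[of n] False x by (intro mult_right_mono) auto
        finally show ?thesis using False by (simp add: g_def)
      qed
      have "norm (\<Sum>n. e n * x ^ n) \<le> (\<Sum>n. norm (e n * x ^ n))" by (rule summable_norm[OF sn])
      also have "\<dots> \<le> (\<Sum>n. g n)" by (intro suminf_le gle sn) (use sg in \<open>simp add: sums_iff\<close>)
      also have "\<dots> = M + \<epsilon> / 2 * (1 / (1 - x))" using sg by (simp add: sums_iff)
      finally have b: "norm (\<Sum>n. e n * x ^ n) \<le> M + \<epsilon> / 2 * (1 / (1 - x))" .
      have "dist ((1 - x) * (\<Sum>n. e n * x ^ n)) 0 = (1 - x) * norm (\<Sum>n. e n * x ^ n)"
        using x by (simp add: abs_mult)
      also have "\<dots> \<le> (1 - x) * (M + \<epsilon> / 2 * (1 / (1 - x)))" using b x by (intro mult_left_mono) auto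
      also have "\<dots> = (1 - x) * M + \<epsilon> / 2" using x by (simp add: field_simps)
      also have "\<dots> < \<epsilon>"
      proof -
        have "(1 - x) * M \<le> \<delta> * M" using x M0 by (intro mult_right_mono) auto
        also have "\<dots> < \<epsilon> / 2"
          using \<epsilon> M0 by (simp add: \<delta>_def field_simps)
        finally show ?thesis by simp
      qed
      finally show ?case .
    qed
  qed
  have "((\<lambda>x. (1 - x) * (\<Sum>n. e n * x ^ n) + s) \<longlongrightarrow> 0 + s) (at_left 1)"
    by (intro tendsto_add F0 tendsto_const)
  moreover have "eventually (\<lambda>x. (1 - x) * (\<Sum>n. e n * x ^ n) + s = (\<Sum>n. a n * x ^ n)) (at_left 1)"
  proof -
    have "eventually (\<lambda>x. x \<in> {0<..<1}) (at_left (1::real))" by (rule eventually_at_left_real) simp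
    then show ?thesis by eventually_elim (use key in auto)
  qed
  ultimately show ?thesis by (simp add: Lim_transform_eventually)
qed



lemma inv_sqrt_summable: "summable (\<lambda>n. 1 / (real n * sqrt (real n + 1)))"
proof (rule summable_comparison_test_bigo)
  show "summable (\<lambda>n. norm (real n powr (-3/2)))"
    using summable_real_powr_iff[of "-3/2"] by simp
  show "(\<lambda>n. 1 / (real n * sqrt (real n + 1))) \<in> O(\<lambda>n. real n powr (-3/2))"
    by real_asymp
qed

lemma aux2:
  fixes u s b d :: real
  assumes "u > 0"
  shows "s / u * b + (- s) / (u + 1) * (b + d) = s * (b / (u * (u + 1)) - d / (u + 1))"
proof -
  have h: "1 / u - 1 / (u + 1) = 1 / (u * (u + 1))" using assms by (simp add: field_simps)
  have "s / u * b + (- s) / (u + 1) * (b + d) = s * b * (1 / u - 1 / (u + 1)) - s * (d / (u + 1))"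
    by (simp add: algebra_simps add_divide_distrib)
  also have "\<dots> = s * (b / (u * (u + 1)) - d / (u + 1))" unfolding h by (simp add: algebra_simps)
  finally show ?thesis .
qed

lemma alt_summable:
  assumes A: "nz A" "A \<noteq> []"
  shows "summable (\<lambda>n. mzv_term (-1) n * mzv_partial A n)"
proof -
  obtain t A' where At: "A = t # A'" using A(2) by (cases A) auto
  have t: "t \<noteq> 0" and A': "nz A'" using A At by auto
  define b where "b = mzv_partial A"
  define D where "D n = mzv_term (-1) n * b n" for n
  define B :: real where "B = 3 ^ length A"
  define B' :: real where "B' = 3 ^ length A'"
  have bb: "\<bar>b n\<bar> \<le> B * sqrt (real n + 1)" for n unfolding b_def B_def by (rule mzv_partial_bound[OF A(1)])
  have bb': "\<bar>mzv_partial A' n\<bar> \<le> B' * sqrt (real n + 1)" for n unfolding B'_def by (rule mzv_partial_bound[OF A'])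
  have Dlim: "D \<longlonglongrightarrow> 0"
  proof (rule Lim_null_comparison)
    show "eventually (\<lambda>n. norm (D n) \<le> B * (sqrt (real n + 1) / real n)) sequentially"
    proof (intro always_eventually allI)
      fix n
      have "norm (D n) = \<bar>mzv_term (-1) n\<bar> * \<bar>b n\<bar>" by (simp add: D_def abs_mult)
      also have "\<dots> \<le> (1 / real n) * (B * sqrt (real n + 1))"
        by (intro mult_mono mzv_term_abs bb) auto
      finally show "norm (D n) \<le> B * (sqrt (real n + 1) / real n)" by simp
    qed
    have "((\<lambda>n. sqrt (real n + 1) / real n) \<longlongrightarrow> 0) sequentially" by real_asymp
    from tendsto_mult[OF tendsto_const[of B] this]
    show "((\<lambda>n. B * (sqrt (real n + 1) / real n)) \<longlongrightarrow> 0) sequentially" by simp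
  qed
  have Sdiff: "summable (\<lambda>n. D n - D (Suc n))" by (rule telescope_summable'[OF Dlim])
  have Sadd: "summable (\<lambda>n. D n + D (Suc n))"
  proof (rule summable_comparison_test_ev)
    show "summable (\<lambda>n. (B + B') * (1 / (real n * sqrt (real n + 1))))"
      by (intro summable_mult inv_sqrt_summable)
    show "eventually (\<lambda>n. norm (D n + D (Suc n)) \<le> (B + B') * (1 / (real n * sqrt (real n + 1)))) sequentially"
      using eventually_ge_at_top[of "1::nat"]
    proof eventually_elim
      case (elim n)
      define u where "u = real n"
      define q where "q = sqrt (u + 1)"
      define d where "d = mzv_term t n * mzv_partial A' n"
      have u: "u \<ge> 1" using elim by (simp add: u_def)
      have q: "q > 0" "q * q = u + 1" using u by (auto simp: q_def)
      have bS: "b (Suc n) = b n + d"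
        using elim by (simp add: b_def At d_def)
      have eqD: "D n + D (Suc n) = (-1) ^ n * (b n / (u * (u + 1)) - d / (u + 1))"
      proof -
        have "D n + D (Suc n) = (-1) ^ n / u * b n + (- ((-1) ^ n)) / (u + 1) * (b n + d)"
          by (simp add: D_def mzv_term_mone bS u_def)
        also have "\<dots> = (-1) ^ n * (b n / (u * (u + 1)) - d / (u + 1))"
          by (rule aux2) (use u in auto)
        finally show ?thesis .
      qed
      have dd: "\<bar>d\<bar> \<le> (1 / u) * (B' * q)"
        unfolding d_def abs_mult u_def q_def by (intro mult_mono mzv_term_abs t bb') auto
      have "norm (D n + D (Suc n)) = \<bar>b n / (u * (u + 1)) - d / (u + 1)\<bar>"
        by (simp add: eqD abs_mult)
      also have "\<dots> \<le> \<bar>b n\<bar> / (u * (u + 1)) + \<bar>d\<bar> / (u + 1)"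
      proof -
        have p1: "\<bar>u * (u + 1)\<bar> = u * (u + 1)" "\<bar>u + 1\<bar> = u + 1" using u by auto
        have "\<bar>b n / (u * (u + 1)) - d / (u + 1)\<bar> \<le> \<bar>b n / (u * (u + 1))\<bar> + \<bar>d / (u + 1)\<bar>"
          by (rule abs_triangle_ineq4)
        then show ?thesis by (simp only: abs_divide p1)
      qed
      also have "\<dots> \<le> (B * q) / (u * (u + 1)) + ((1 / u) * (B' * q)) / (u + 1)"
        using u bb[of n] dd by (intro add_mono divide_right_mono) (auto simp: q_def u_def)
      also have "\<dots> = (B + B') * (q / (u * (u + 1)))"
        using u by (simp add: divide_simps) (simp add: algebra_simps)
      also have "\<dots> = (B + B') * (1 / (u * q))"
      proof -
        have "q / (u * (u + 1)) = q / (u * (q * q))" by (subst q(2)) (rule refl)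
        also have "\<dots> = 1 / (u * q)" using q(1) u by (simp add: field_simps)
        finally show ?thesis by simp
      qed
      finally show ?case by (simp add: u_def q_def)
    qed
  qed
  have "summable (\<lambda>n. ((D n + D (Suc n)) + (D n - D (Suc n))) / 2)"
    by (intro summable_divide summable_add Sadd Sdiff)
  then show ?thesis by (simp add: D_def b_def mult.commute)
qed



lemma sum_from1: "f 0 = 0 \<Longrightarrow> (\<Sum>n\<in>{1..<N}. f n) = (\<Sum>n<(N::nat). (f n :: real))"
proof (cases N)
  case (Suc N')
  assume f0: "f 0 = 0"
  have "{..<N} = insert 0 {1..<N}" using Suc by auto
  then show ?thesis using f0 by simp
qed simp

theorem theorem3p2:
  fixes m k :: nat
  shows "mzv ([-1] @ replicate m 1 @ [-1] @ replicate k 1)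
         = (-1) ^ (m + 1) * mpl ((k + 2) # replicate m 1) (1 / 2)"
proof -
  define A where "A = Ch k m"
  have chain: "[-1] @ replicate m 1 @ [-1] @ replicate k 1 = (-1) # A" by (simp add: A_def Ch_def)
  have A: "nz A" "A \<noteq> []" by (auto simp: A_def nz_Ch Ch_def)
  define D where "D n = mzv_term (-1) n * mzv_partial A n" for n
  have sD: "summable D" unfolding D_def[abs_def] by (rule alt_summable[OF A])
  have mzv_eq: "mzv ((-1) # A) = suminf D"
  proof -
    have "(\<lambda>N. mzv_partial ((-1) # A) N) = (\<lambda>N. \<Sum>n<N. D n)"
    proof
      fix N
      have "mzv_partial ((-1) # A) N = (\<Sum>n\<in>{1..<N}. D n)" by (simp add: D_def)
      also have "\<dots> = (\<Sum>n<N. D n)" by (rule sum_from1) (simp add: D_def mzv_term_0)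
      finally show "mzv_partial ((-1) # A) N = (\<Sum>n<N. D n)" .
    qed
    then show ?thesis by (simp add: mzv_def suminf_eq_lim)
  qed
  define L where "L = LL m (k + 2) (1 / 2)"
  have mpl_eq: "mpl ((k + 2) # replicate m 1) (1 / 2) = L"
  proof -
    define f where "f n = (mzv_term (int (k + 2)) n * mzv_partial (replicate m 1) n) * (1 / 2) ^ n" for n
    have "(\<lambda>N. mpl_partial ((k + 2) # replicate m 1) (1 / 2) N) = (\<lambda>N. \<Sum>n<N. f n)"
    proof
      fix N
      have "mpl_partial ((k + 2) # replicate m 1) (1 / 2) N = (\<Sum>n\<in>{1..<N}. f n)"
        unfolding mpl_partial.simps f_def mzv_term_nat by (intro sum.cong refl) (simp add: map_replicate_const)
      also have "\<dots> = (\<Sum>n<N. f n)" by (rule sum_from1) (simp add: f_def mzv_term_0)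
      finally show "mpl_partial ((k + 2) # replicate m 1) (1 / 2) N = (\<Sum>n<N. f n)" .
    qed
    then have "mpl ((k + 2) # replicate m 1) (1 / 2) = suminf f" by (simp add: mpl_def suminf_eq_lim)
    also have "\<dots> = L" by (simp add: f_def[abs_def] L_def LL_def)
    finally show ?thesis .
  qed
  have Ab: "((\<lambda>x. \<Sum>n. D n * x ^ n) \<longlongrightarrow> suminf D) (at_left 1)"
    by (rule abel_thm) (rule summable_sums[OF sD])
  have eqH: "(-1) ^ (m + 1) * FF k (Suc m) x = (\<Sum>n. D n * x ^ n)" for x
  proof -
    have "FF k (Suc m) x = (-1) ^ (m + 1) * Gc (1 # A) (- x)" by (simp add: FF_def A_def Ch_Suc)
    also have "Gc (1 # A) (- x) = Gc ((-1) # A) x" by (rule Gc_neg[OF A(1), symmetric])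
    also have "Gc ((-1) # A) x = (\<Sum>n. D n * x ^ n)" by (simp add: D_def)
    finally have "FF k (Suc m) x = (-1) ^ (m + 1) * (\<Sum>n. D n * x ^ n)" .
    then show ?thesis by (simp flip: power_add add: power_mult[symmetric])
  qed
  have "((\<lambda>x. (-1) ^ (m + 1) * FF k (Suc m) x) \<longlongrightarrow> (-1) ^ (m + 1) * L) (at_left 1)"
    unfolding L_def by (intro tendsto_mult tendsto_const FF_lim)
  then have "((\<lambda>x. \<Sum>n. D n * x ^ n) \<longlongrightarrow> (-1) ^ (m + 1) * L) (at_left 1)"
    unfolding eqH .
  then have "suminf D = (-1) ^ (m + 1) * L"
    using Ab by (intro tendsto_unique[OF trivial_limit_at_left_real]) 
  then show ?thesis unfolding chain mzv_eq mpl_eq .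
qed

end
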